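(* Let $r_1, r_2 \geq 0$ be integers and let $c > 0$ be a real number. Let $f_1 : \mathbb{R}^{r_1} \to \mathbb{R}$ and $f_2 : \mathbb{R}^{r_2} \to \mathbb{R}$ be functions such that, for each $i = 1, 2$: (1) $f_i(x) \geq 0$ for all $x$, and $f_i(x) = 0$ if and only if $x = 0$; (2) $f_i$ is continuous; (3) $f_i(\lambda x) = |\lambda|^{c} f_i(x)$ for all $x \in \mathbb{R}^{r_i}$ and all $\lambda \in \mathbb{R}$. Equip $\mathbb{Z}^{r_1}$ with the counting measure and $\mathbb{R}^{r_1}$, $\mathbb{R}^{r_2}$ with Lebesgue measure, and equip the products $\mathbb{Z}^{r_1}\times\mathbb{R}^{r_2}$ and $\mathbb{R}^{r_1}\times\mathbb{R}^{r_2}$ with the product measures $\mu$. For $B > 0$ let \[ I(B) = \{ (n, y) \in \mathbb{Z}^{r_1} \times \mathbb{R}^{r_2} : f_1(n) + f_2(y) \leq B \}, \qquad V(B) = \{ (x, y) \in \mathbb{R}^{r_1} \times \mathbb{R}^{r_2} : f_1(x) + f_2(y) \leq B \}. \] Then \[ \lim_{B \to \infty} \frac{\mu(I(B))}{\mu(V(B))} = 1. \] *)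

theory Defs
  imports "HOL-Analysis.Analysis"
begin

text \<open>Euclidean space R^r is represented as the extensional functions
  on the index set {..<r}, i.e. PiE {..<r} (\<lambda>_. UNIV) :: (nat \<Rightarrow> real) set.
  This allows r = 0 (a single point).\<close>

definition rvec :: "nat \<Rightarrow> (nat \<Rightarrow> real) set" where
  "rvec r = PiE {..<r} (\<lambda>_. UNIV)"

definition zvec :: "nat \<Rightarrow> (nat \<Rightarrow> real) set" where
  "zvec r = PiE {..<r} (\<lambda>_. \<int>)"

definition zero_vec :: "nat \<Rightarrow> nat \<Rightarrow> real" where
  "zero_vec r = restrict (\<lambda>_. 0) {..<r}"

definition scale_vec :: "nat \<Rightarrow> real \<Rightarrow> (nat \<Rightarrow> real) \<Rightarrow> nat \<Rightarrow> real" where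
  "scale_vec r l x = restrict (\<lambda>i. l * x i) {..<r}"

definition leb_vec :: "nat \<Rightarrow> (nat \<Rightarrow> real) measure" where
  "leb_vec r = PiM {..<r} (\<lambda>_. lborel)"

definition count_zvec :: "nat \<Rightarrow> (nat \<Rightarrow> real) measure" where
  "count_zvec r = count_space (zvec r)"

definition admissible :: "nat \<Rightarrow> real \<Rightarrow> ((nat \<Rightarrow> real) \<Rightarrow> real) \<Rightarrow> bool" where
  "admissible r c f \<longleftrightarrow>
     (\<forall>x\<in>rvec r. f x \<ge> 0 \<and> (f x = 0 \<longleftrightarrow> x = zero_vec r)) \<and>
     continuous_on (rvec r) f \<and>
     (\<forall>x\<in>rvec r. \<forall>l::real. f (scale_vec r l x) = \<bar>l\<bar> powr c * f x)"

definition I_set :: "nat \<Rightarrow> nat \<Rightarrow> ((nat \<Rightarrow> real) \<Rightarrow> real) \<Rightarrow> ((nat \<Rightarrow> real) \<Rightarrow> real)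
    \<Rightarrow> real \<Rightarrow> ((nat \<Rightarrow> real) \<times> (nat \<Rightarrow> real)) set" where
  "I_set r1 r2 f1 f2 B = {(n, y). n \<in> zvec r1 \<and> y \<in> rvec r2 \<and> f1 n + f2 y \<le> B}"

definition V_set :: "nat \<Rightarrow> nat \<Rightarrow> ((nat \<Rightarrow> real) \<Rightarrow> real) \<Rightarrow> ((nat \<Rightarrow> real) \<Rightarrow> real)
    \<Rightarrow> real \<Rightarrow> ((nat \<Rightarrow> real) \<times> (nat \<Rightarrow> real)) set" where
  "V_set r1 r2 f1 f2 B = {(x, y). x \<in> rvec r1 \<and> y \<in> rvec r2 \<and> f1 x + f2 y \<le> B}"

end

theory Submission
  imports Defs
begin


lemma space_leb_vec[simp]: "space (leb_vec r) = rvec r"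
  by (simp add: leb_vec_def rvec_def space_PiM)

lemma sets_count_zvec[simp]: "sets (count_zvec r) = Pow (zvec r)"
  by (simp add: count_zvec_def)

lemma space_count_zvec[simp]: "space (count_zvec r) = zvec r"
  by (simp add: count_zvec_def)

lemma countable_zvec: "countable (zvec r)"
  unfolding zvec_def
  by (intro countable_PiE) (auto simp: Ints_def)

lemma zvec_sub_rvec: "zvec r \<subseteq> rvec r"
  by (auto simp: zvec_def rvec_def PiE_iff)

interpretation pl: product_sigma_finite "\<lambda>_::nat. lborel::real measure"
  by standard

lemma sf_leb_vec: "sigma_finite_measure (leb_vec r)"
proof -
  interpret finite_product_sigma_finite "\<lambda>_::nat. lborel::real measure" "{..<r}"
    by standard simp
  show ?thesis unfolding leb_vec_def by (rule sigma_finite_measure_axioms)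
qed

lemma sf_count_zvec: "sigma_finite_measure (count_zvec r)"
  unfolding count_zvec_def by (rule sigma_finite_measure_count_space_countable[OF countable_zvec])

lemma emeasure_leb_vec_box:
  assumes "\<And>i. i < r \<Longrightarrow> A i \<in> sets borel"
  shows "emeasure (leb_vec r) (PiE {..<r} A) = (\<Prod>i<r. emeasure lborel (A i))"
  unfolding leb_vec_def using assms by (subst pl.emeasure_PiM) auto

lemma lborel_scale_preimage:
  assumes "s > (0::real)" "A \<in> sets borel"
  shows "emeasure lborel ((*) s -` A) = ennreal (1/s) * emeasure lborel A"
proof -
  have "emeasure lborel ((*) s -` A) = emeasure (distr lborel borel ((*) s)) A"
    using assms by (subst emeasure_distr) auto
  also have "\<dots> = emeasure (density lborel (\<lambda>_. inverse \<bar>s\<bar>)) A"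
    using assms by (simp add: lborel_distr_mult)
  also have "\<dots> = ennreal (1/s) * emeasure lborel A"
    using assms by (subst emeasure_density_const) (auto simp: divide_inverse)
  finally show ?thesis .
qed

lemma scale_vec_measurable[measurable]:
  "scale_vec r s \<in> measurable (leb_vec r) (leb_vec r)"
  unfolding scale_vec_def leb_vec_def
  by (intro measurable_restrict) measurable

lemma scale_vec_preimage_box:
  "scale_vec r s -` PiE {..<r} A \<inter> rvec r = PiE {..<r} (\<lambda>i. (*) s -` A i)"
  by (auto simp: scale_vec_def rvec_def PiE_iff)

lemma leb_vec_scale:
  assumes "s > 0"
  shows "scale_measure (ennreal s ^ r) (distr (leb_vec r) (leb_vec r) (scale_vec r s)) = leb_vec r"
  unfolding leb_vec_def
proof (rule pl.PiM_eqI)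
  show "sets (scale_measure (ennreal s ^ r) (distr (Pi\<^sub>M {..<r} (\<lambda>_. lborel)) (Pi\<^sub>M {..<r} (\<lambda>_. lborel)) (scale_vec r s)))
     = sets (Pi\<^sub>M {..<r} (\<lambda>_. lborel))" by simp
next
  fix A assume A: "\<And>i. i \<in> {..<r} \<Longrightarrow> A i \<in> sets (lborel::real measure)"
  have "emeasure (distr (Pi\<^sub>M {..<r} (\<lambda>_. lborel)) (Pi\<^sub>M {..<r} (\<lambda>_. lborel)) (scale_vec r s)) (PiE {..<r} A)
      = emeasure (leb_vec r) (scale_vec r s -` PiE {..<r} A \<inter> rvec r)"
    using A scale_vec_measurable[of r s] by (subst emeasure_distr) (auto simp: leb_vec_def space_PiM rvec_def intro!: sets_PiM_I_finite)
  also have "\<dots> = (\<Prod>i<r. emeasure lborel ((*) s -` A i))"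
    unfolding scale_vec_preimage_box using A assms
    by (subst emeasure_leb_vec_box) (auto intro!: measurable_sets_borel[of "(*) s" borel])
  also have "\<dots> = (\<Prod>i<r. ennreal (1/s) * emeasure lborel (A i))"
    using A assms by (intro prod.cong refl lborel_scale_preimage) auto
  finally have "ennreal s ^ r * emeasure (distr (Pi\<^sub>M {..<r} (\<lambda>_. lborel)) (Pi\<^sub>M {..<r} (\<lambda>_. lborel)) (scale_vec r s)) (PiE {..<r} A)
     = (\<Prod>i<r. ennreal s * (ennreal (1/s) * emeasure lborel (A i)))"
    by (simp add: prod.distrib)
  also have "\<dots> = (\<Prod>i<r. emeasure lborel (A i))"
    using assms by (intro prod.cong refl) (simp add: mult.assoc[symmetric] ennreal_mult[symmetric])
  finally show "emeasure (scale_measure (ennreal s ^ r) (distr (Pi\<^sub>M {..<r} (\<lambda>_. lborel)) (Pi\<^sub>M {..<r} (\<lambda>_. lborel)) (scale_vec r s))) (PiE {..<r} A)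
     = (\<Prod>i\<in>{..<r}. emeasure lborel (A i))" by simp
qed simp

lemma leb_vec_scale_emeasure:
  assumes "s > 0" "X \<in> sets (leb_vec r)"
  shows "emeasure (leb_vec r) X = ennreal s ^ r * emeasure (leb_vec r) (scale_vec r s -` X \<inter> rvec r)"
proof -
  have "emeasure (leb_vec r) X = emeasure (scale_measure (ennreal s ^ r) (distr (leb_vec r) (leb_vec r) (scale_vec r s))) X"
    using leb_vec_scale[OF assms(1)] by simp
  also have "\<dots> = ennreal s ^ r * emeasure (leb_vec r) (scale_vec r s -` X \<inter> rvec r)"
    using assms by (simp add: emeasure_distr)
  finally show ?thesis .
qed

lemma leb_vec_scale_nn_integral:
  assumes "s > 0" "g \<in> borel_measurable (leb_vec r)"
  shows "(\<integral>\<^sup>+x. g x \<partial>leb_vec r) = ennreal s ^ r * (\<integral>\<^sup>+x. g (scale_vec r s x) \<partial>leb_vec r)"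
proof -
  have "(\<integral>\<^sup>+x. g x \<partial>leb_vec r) = (\<integral>\<^sup>+x. g x \<partial>scale_measure (ennreal s ^ r) (distr (leb_vec r) (leb_vec r) (scale_vec r s)))"
    using leb_vec_scale[OF assms(1)] by simp
  also have "\<dots> = ennreal s ^ r * (\<integral>\<^sup>+x. g (scale_vec r s x) \<partial>leb_vec r)"
    using assms by (simp add: nn_integral_scale_measure nn_integral_distr)
  finally show ?thesis .
qed

lemma id_borel_leb_vec: "(\<lambda>x. x) \<in> borel_measurable (leb_vec r)"
proof (rule measurable_coordinatewise_then_product)
  fix i
  show "(\<lambda>x. x i) \<in> borel_measurable (leb_vec r)"
  proof (cases "i < r")
    case True
    then show ?thesis unfolding leb_vec_def using measurable_component_singleton[of i "{..<r}" "\<lambda>_. lborel::real measure"] by simp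
  next
    case False
    have "(\<lambda>x. undefined) \<in> borel_measurable (leb_vec r)" by simp
    then show ?thesis
      by (rule measurable_cong[THEN iffD1, rotated]) (use False in \<open>auto simp: rvec_def PiE_def extensional_def\<close>)
  qed
qed

lemma continuous_restrict_vec: "continuous_on UNIV (\<lambda>x::nat\<Rightarrow>real. restrict x {..<r})"
proof (rule continuous_on_coordinatewise_then_product)
  fix i
  show "continuous_on UNIV (\<lambda>x::nat\<Rightarrow>real. restrict x {..<r} i)"
    by (cases "i < r") (auto intro: continuous_on_product_coordinates)
qed

lemma cont_borel_leb_vec:
  assumes "continuous_on (rvec r) f"
  shows "f \<in> borel_measurable (leb_vec r)"
proof -
  let ?g = "\<lambda>x. f (restrict x {..<r})"
  have "continuous_on UNIV ?g"
    by (rule continuous_on_compose2[OF assms continuous_restrict_vec]) (auto simp: rvec_def split: if_splits)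
  then have "?g \<in> borel_measurable borel" by (rule borel_measurable_continuous_onI)
  then have "(\<lambda>x. ?g x) \<in> borel_measurable (leb_vec r)"
    using measurable_comp[OF id_borel_leb_vec] by (simp add: comp_def)
  then show ?thesis
    by (rule measurable_cong[THEN iffD1, rotated]) (auto simp: rvec_def PiE_def extensional_def restrict_def intro!: arg_cong[where f=f] ext)
qed

definition fl :: "nat \<Rightarrow> (nat \<Rightarrow> real) \<Rightarrow> nat \<Rightarrow> real" where
  "fl r x = restrict (\<lambda>i. real_of_int \<lfloor>x i\<rfloor>) {..<r}"

lemma fl_zvec: "fl r x \<in> zvec r"
  by (auto simp: fl_def zvec_def)

lemma fl_preimage:
  assumes "n \<in> zvec r"
  shows "fl r -` {n} \<inter> rvec r = PiE {..<r} (\<lambda>i. {n i ..< n i + 1})"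
proof (intro set_eqI iffI)
  fix x assume x: "x \<in> fl r -` {n} \<inter> rvec r"
  show "x \<in> PiE {..<r} (\<lambda>i. {n i ..< n i + 1})"
  proof -
    have "\<And>i. i < r \<Longrightarrow> n i = real_of_int \<lfloor>x i\<rfloor>"
      using x by (auto simp: fl_def)
    then show ?thesis using x
      by (auto simp: rvec_def PiE_iff)
  qed
next
  fix x assume x: "x \<in> PiE {..<r} (\<lambda>i. {n i ..< n i + 1})"
  have "\<And>i. i < r \<Longrightarrow> real_of_int \<lfloor>x i\<rfloor> = n i"
  proof -
    fix i assume i: "i < r"
    obtain k where k: "n i = of_int k" using assms i by (auto simp: zvec_def PiE_iff elim!: Ints_cases)
    have "n i \<le> x i \<and> x i < n i + 1" using x i by (auto simp: PiE_iff)
    then have "k \<le> x i" "x i < k + 1" using k by auto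
    then have "\<lfloor>x i\<rfloor> = k" by linarith
    then show "real_of_int \<lfloor>x i\<rfloor> = n i" using k by simp
  qed
  moreover have "n \<in> extensional {..<r}" using assms by (auto simp: zvec_def PiE_def)
  ultimately have "fl r x = n" by (auto simp: fl_def extensional_def)
  then show "x \<in> fl r -` {n} \<inter> rvec r" using x by (auto simp: rvec_def PiE_iff)
qed

lemma fl_measurable: "fl r \<in> measurable (leb_vec r) (count_zvec r)"
  unfolding count_zvec_def
proof (subst measurable_count_space_eq_countable[OF countable_zvec], intro conjI ballI)
  show "fl r \<in> space (leb_vec r) \<rightarrow> zvec r" using fl_zvec by auto
next
  fix n assume "n \<in> zvec r"
  then show "fl r -` {n} \<inter> space (leb_vec r) \<in> sets (leb_vec r)"
    by (simp only: space_leb_vec fl_preimage, unfold leb_vec_def, intro sets_PiM_I_finite) auto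
qed

lemma distr_fl: "distr (leb_vec r) (count_zvec r) (fl r) = count_zvec r"
proof (rule measure_eqI_countable[OF _ _ countable_zvec])
  fix n assume n: "n \<in> zvec r"
  have "emeasure (distr (leb_vec r) (count_zvec r) (fl r)) {n} = emeasure (leb_vec r) (fl r -` {n} \<inter> rvec r)"
    using n fl_measurable by (subst emeasure_distr) auto
  also have "\<dots> = 1"
    using n by (simp add: fl_preimage emeasure_leb_vec_box)
  also have "\<dots> = emeasure (count_zvec r) {n}"
    using n by (simp add: count_zvec_def emeasure_count_space_finite)
  finally show "emeasure (distr (leb_vec r) (count_zvec r) (fl r)) {n} = emeasure (count_zvec r) {n}" .
qed auto

lemma pair_fl:
  "distr (leb_vec r1 \<Otimes>\<^sub>M leb_vec r2) (count_zvec r1 \<Otimes>\<^sub>M leb_vec r2) (\<lambda>(x, y). (fl r1 x, y))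
   = count_zvec r1 \<Otimes>\<^sub>M leb_vec r2"
proof -
  have "distr (leb_vec r1) (count_zvec r1) (fl r1) \<Otimes>\<^sub>M distr (leb_vec r2) (leb_vec r2) (\<lambda>y. y)
     = distr (leb_vec r1 \<Otimes>\<^sub>M leb_vec r2) (count_zvec r1 \<Otimes>\<^sub>M leb_vec r2) (\<lambda>(x, y). (fl r1 x, y))"
    by (rule pair_measure_distr[OF fl_measurable]) (auto simp: sf_leb_vec)
  then show ?thesis by (simp add: distr_fl)
qed

definition W_set :: "nat \<Rightarrow> nat \<Rightarrow> ((nat \<Rightarrow> real) \<Rightarrow> real) \<Rightarrow> ((nat \<Rightarrow> real) \<Rightarrow> real)
    \<Rightarrow> real \<Rightarrow> ((nat \<Rightarrow> real) \<times> (nat \<Rightarrow> real)) set" where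
  "W_set r1 r2 f1 f2 B = {(x, y). x \<in> rvec r1 \<and> y \<in> rvec r2 \<and> f1 (fl r1 x) + f2 y \<le> B}"

lemma I_set_sets:
  assumes "f2 \<in> borel_measurable (leb_vec r2)"
  shows "I_set r1 r2 f1 f2 B \<in> sets (count_zvec r1 \<Otimes>\<^sub>M leb_vec r2)"
proof -
  have m1: "(\<lambda>p. f1 (fst p)) \<in> borel_measurable (count_zvec r1 \<Otimes>\<^sub>M leb_vec r2)"
    by (rule measurable_compose[OF measurable_fst]) (simp add: count_zvec_def)
  have m2: "(\<lambda>p. f2 (snd p)) \<in> borel_measurable (count_zvec r1 \<Otimes>\<^sub>M leb_vec r2)"
    by (rule measurable_compose[OF measurable_snd assms])
  have "{p \<in> space (count_zvec r1 \<Otimes>\<^sub>M leb_vec r2). f1 (fst p) + f2 (snd p) \<le> (\<lambda>_. B) p}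
      \<in> sets (count_zvec r1 \<Otimes>\<^sub>M leb_vec r2)"
    using m1 m2 by (intro borel_measurable_le borel_measurable_add) auto
  also have "{p \<in> space (count_zvec r1 \<Otimes>\<^sub>M leb_vec r2). f1 (fst p) + f2 (snd p) \<le> (\<lambda>_. B) p} = I_set r1 r2 f1 f2 B"
    by (auto simp: I_set_def space_pair_measure)
  finally show ?thesis .
qed

lemma V_set_sets:
  assumes "f1 \<in> borel_measurable (leb_vec r1)" "f2 \<in> borel_measurable (leb_vec r2)"
  shows "V_set r1 r2 f1 f2 B \<in> sets (leb_vec r1 \<Otimes>\<^sub>M leb_vec r2)"
proof -
  have m1: "(\<lambda>p. f1 (fst p)) \<in> borel_measurable (leb_vec r1 \<Otimes>\<^sub>M leb_vec r2)"
    by (rule measurable_compose[OF measurable_fst assms(1)])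
  have m2: "(\<lambda>p. f2 (snd p)) \<in> borel_measurable (leb_vec r1 \<Otimes>\<^sub>M leb_vec r2)"
    by (rule measurable_compose[OF measurable_snd assms(2)])
  have "{p \<in> space (leb_vec r1 \<Otimes>\<^sub>M leb_vec r2). f1 (fst p) + f2 (snd p) \<le> (\<lambda>_. B) p}
      \<in> sets (leb_vec r1 \<Otimes>\<^sub>M leb_vec r2)"
    using m1 m2 by (intro borel_measurable_le borel_measurable_add) auto
  also have "{p \<in> space (leb_vec r1 \<Otimes>\<^sub>M leb_vec r2). f1 (fst p) + f2 (snd p) \<le> (\<lambda>_. B) p} = V_set r1 r2 f1 f2 B"
    by (auto simp: V_set_def space_pair_measure)
  finally show ?thesis .
qed

lemma I_eq_W:
  assumes "f2 \<in> borel_measurable (leb_vec r2)"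
  shows "emeasure (count_zvec r1 \<Otimes>\<^sub>M leb_vec r2) (I_set r1 r2 f1 f2 B)
       = emeasure (leb_vec r1 \<Otimes>\<^sub>M leb_vec r2) (W_set r1 r2 f1 f2 B)"
proof -
  have meas: "(\<lambda>(x, y). (fl r1 x, y)) \<in> measurable (leb_vec r1 \<Otimes>\<^sub>M leb_vec r2) (count_zvec r1 \<Otimes>\<^sub>M leb_vec r2)"
    using fl_measurable by measurable
  have "emeasure (count_zvec r1 \<Otimes>\<^sub>M leb_vec r2) (I_set r1 r2 f1 f2 B)
     = emeasure (distr (leb_vec r1 \<Otimes>\<^sub>M leb_vec r2) (count_zvec r1 \<Otimes>\<^sub>M leb_vec r2) (\<lambda>(x, y). (fl r1 x, y))) (I_set r1 r2 f1 f2 B)"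
    by (simp add: pair_fl)
  also have "\<dots> = emeasure (leb_vec r1 \<Otimes>\<^sub>M leb_vec r2) ((\<lambda>(x, y). (fl r1 x, y)) -` I_set r1 r2 f1 f2 B \<inter> space (leb_vec r1 \<Otimes>\<^sub>M leb_vec r2))"
    by (rule emeasure_distr[OF meas I_set_sets[OF assms]])
  also have "(\<lambda>(x, y). (fl r1 x, y)) -` I_set r1 r2 f1 f2 B \<inter> space (leb_vec r1 \<Otimes>\<^sub>M leb_vec r2) = W_set r1 r2 f1 f2 B"
    by (auto simp: I_set_def W_set_def space_pair_measure fl_zvec)
  finally show ?thesis .
qed

lemma scale_vec_rvec[simp]: "scale_vec r s x \<in> rvec r"
  by (simp add: scale_vec_def rvec_def)

definition hh :: "nat \<Rightarrow> ((nat \<Rightarrow> real) \<Rightarrow> real) \<Rightarrow> real \<Rightarrow> ennreal" where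
  "hh r f t = emeasure (leb_vec r) {y \<in> rvec r. f y \<le> t}"

lemma hh_scale:
  assumes "s > 0" "f \<in> borel_measurable (leb_vec r)"
    and hom: "\<forall>x\<in>rvec r. \<forall>l::real. f (scale_vec r l x) = \<bar>l\<bar> powr c * f x"
  shows "hh r f (s powr c * t) = ennreal s ^ r * hh r f t"
proof -
  have X: "{y \<in> rvec r. f y \<le> s powr c * t} \<in> sets (leb_vec r)"
  proof -
    have "{y \<in> space (leb_vec r). f y \<le> (\<lambda>_. s powr c * t) y} \<in> sets (leb_vec r)"
      using assms(2) by (intro borel_measurable_le) auto
    then show ?thesis by (simp only: space_leb_vec)
  qed
  have pre: "scale_vec r s -` {y \<in> rvec r. f y \<le> s powr c * t} \<inter> rvec r = {y \<in> rvec r. f y \<le> t}"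
    using hom assms(1) by auto
  show ?thesis
    using leb_vec_scale_emeasure[OF assms(1) X] unfolding pre hh_def .
qed

lemma V_fubini:
  assumes "V_set r1 r2 f1 f2 B \<in> sets (leb_vec r1 \<Otimes>\<^sub>M leb_vec r2)"
  shows "emeasure (leb_vec r1 \<Otimes>\<^sub>M leb_vec r2) (V_set r1 r2 f1 f2 B)
    = (\<integral>\<^sup>+x. emeasure (leb_vec r2) (Pair x -` V_set r1 r2 f1 f2 B) \<partial>leb_vec r1)"
proof -
  interpret M2: sigma_finite_measure "leb_vec r2" by (rule sf_leb_vec)
  show ?thesis by (rule M2.emeasure_pair_measure_alt[OF assms])
qed

lemma V_slice:
  "x \<in> rvec r1 \<Longrightarrow> Pair x -` V_set r1 r2 f1 f2 B = {y \<in> rvec r2. f2 y \<le> B - f1 x}"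
  by (auto simp: V_set_def)

lemma V_scale:
  assumes "s > 0" "f1 \<in> borel_measurable (leb_vec r1)" "f2 \<in> borel_measurable (leb_vec r2)"
    and hom1: "\<forall>x\<in>rvec r1. \<forall>l::real. f1 (scale_vec r1 l x) = \<bar>l\<bar> powr c * f1 x"
    and hom2: "\<forall>x\<in>rvec r2. \<forall>l::real. f2 (scale_vec r2 l x) = \<bar>l\<bar> powr c * f2 x"
  shows "emeasure (leb_vec r1 \<Otimes>\<^sub>M leb_vec r2) (V_set r1 r2 f1 f2 (s powr c * B))
    = ennreal s ^ (r1 + r2) * emeasure (leb_vec r1 \<Otimes>\<^sub>M leb_vec r2) (V_set r1 r2 f1 f2 B)"
proof -
  interpret M2: sigma_finite_measure "leb_vec r2" by (rule sf_leb_vec)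
  define G where "G = (\<lambda>B x. emeasure (leb_vec r2) (Pair x -` V_set r1 r2 f1 f2 B))"
  have Gm: "G B' \<in> borel_measurable (leb_vec r1)" for B'
    unfolding G_def using V_set_sets[OF assms(2,3)] by (rule M2.measurable_emeasure_Pair)
  have GS: "G (s powr c * B) (scale_vec r1 s x) = ennreal s ^ r2 * G B x" if x: "x \<in> rvec r1" for x
  proof -
    have "G (s powr c * B) (scale_vec r1 s x) = hh r2 f2 (s powr c * B - f1 (scale_vec r1 s x))"
      unfolding G_def hh_def by (simp add: V_slice)
    also have "s powr c * B - f1 (scale_vec r1 s x) = s powr c * (B - f1 x)"
      using hom1 x assms(1) by (simp add: algebra_simps)
    also have "hh r2 f2 (s powr c * (B - f1 x)) = ennreal s ^ r2 * hh r2 f2 (B - f1 x)"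
      by (rule hh_scale[OF assms(1,3) hom2])
    also have "hh r2 f2 (B - f1 x) = G B x"
      unfolding G_def hh_def using x by (simp add: V_slice)
    finally show ?thesis .
  qed
  have "emeasure (leb_vec r1 \<Otimes>\<^sub>M leb_vec r2) (V_set r1 r2 f1 f2 (s powr c * B))
      = (\<integral>\<^sup>+x. G (s powr c * B) x \<partial>leb_vec r1)"
    unfolding G_def by (rule V_fubini[OF V_set_sets[OF assms(2,3)]])
  also have "\<dots> = ennreal s ^ r1 * (\<integral>\<^sup>+x. G (s powr c * B) (scale_vec r1 s x) \<partial>leb_vec r1)"
    by (rule leb_vec_scale_nn_integral[OF assms(1) Gm])
  also have "(\<integral>\<^sup>+x. G (s powr c * B) (scale_vec r1 s x) \<partial>leb_vec r1) = (\<integral>\<^sup>+x. ennreal s ^ r2 * G B x \<partial>leb_vec r1)"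
    by (rule nn_integral_cong) (simp add: GS)
  also have "\<dots> = ennreal s ^ r2 * (\<integral>\<^sup>+x. G B x \<partial>leb_vec r1)"
    using Gm by (rule nn_integral_cmult)
  also have "(\<integral>\<^sup>+x. G B x \<partial>leb_vec r1) = emeasure (leb_vec r1 \<Otimes>\<^sub>M leb_vec r2) (V_set r1 r2 f1 f2 B)"
    unfolding G_def by (rule V_fubini[OF V_set_sets[OF assms(2,3)], symmetric])
  finally show ?thesis by (simp add: power_add mult_ac)
qed



definition vbox :: "nat \<Rightarrow> real \<Rightarrow> (nat \<Rightarrow> real) set" where
  "vbox r R = PiE {..<r} (\<lambda>_. {-R..R})"

lemma vbox_sub_rvec: "vbox r R \<subseteq> rvec r"
  by (auto simp: vbox_def rvec_def PiE_iff)

lemma compact_vbox: "compact (vbox r R)"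
proof -
  have eq: "vbox r R = PiE UNIV (\<lambda>i. if i < r then {-R..R} else {undefined})"
  proof (intro set_eqI iffI)
    fix x assume "x \<in> vbox r R"
    then show "x \<in> PiE UNIV (\<lambda>i. if i < r then {-R..R} else {undefined})"
      unfolding vbox_def PiE_UNIV_domain by (auto simp: PiE_def Pi_def extensional_def)
  next
    fix x assume x: "x \<in> PiE UNIV (\<lambda>i. if i < r then {-R..R} else {undefined})"
    then have "\<forall>i. x i \<in> (if i < r then {-R..R} else {undefined})" unfolding PiE_UNIV_domain Pi_def by blast
    then have "\<forall>i. (i < r \<longrightarrow> x i \<in> {-R..R}) \<and> (\<not> i < r \<longrightarrow> x i = undefined)"
      by (metis singletonD)
    then show "x \<in> vbox r R" unfolding vbox_def by (auto simp: PiE_def Pi_def extensional_def)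
  qed
  have "compactin (product_topology (\<lambda>_. euclidean) UNIV) (PiE UNIV (\<lambda>i. if i < r then {-R..R} else {undefined::real}))"
  proof (subst compactin_PiE, rule disjI2, intro ballI)
    fix i :: nat
    show "compactin euclidean (if i < r then {-R..R} else {undefined::real})"
      by (cases "i < r") auto
  qed
  then show ?thesis unfolding eq euclidean_product_topology by simp
qed

lemma closed_coord_abs_eq: "closed {u::nat\<Rightarrow>real. \<bar>u i\<bar> = a}"
  by (rule closed_Collect_eq) (auto intro!: continuous_on_rabs continuous_on_product_coordinates)

definition vsph :: "nat \<Rightarrow> (nat \<Rightarrow> real) set" where
  "vsph r = vbox r 1 \<inter> (\<Union>i<r. {u. \<bar>u i\<bar> = 1})"

lemma compact_vsph: "compact (vsph r)"
  unfolding vsph_def by (intro compact_Int_closed compact_vbox closed_UN ballI closed_coord_abs_eq) auto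

lemma vsph_sub_rvec: "vsph r \<subseteq> rvec r"
  using vbox_sub_rvec by (auto simp: vsph_def)

lemma zero_vec_notin_vsph: "zero_vec r \<notin> vsph r"
  by (auto simp: vsph_def zero_vec_def)

lemma adm_pos: "admissible r c f \<Longrightarrow> x \<in> rvec r \<Longrightarrow> x \<noteq> zero_vec r \<Longrightarrow> f x > 0"
  unfolding admissible_def by (metis less_eq_real_def)

lemma adm_nonneg: "admissible r c f \<Longrightarrow> x \<in> rvec r \<Longrightarrow> f x \<ge> 0"
  unfolding admissible_def by blast

lemma adm_zero: "admissible r c f \<Longrightarrow> f (zero_vec r) = 0"
  unfolding admissible_def by (auto simp: zero_vec_def rvec_def)

lemma adm_cont: "admissible r c f \<Longrightarrow> continuous_on (rvec r) f"
  unfolding admissible_def by blast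

lemma adm_hom: "admissible r c f \<Longrightarrow> x \<in> rvec r \<Longrightarrow> f (scale_vec r l x) = \<bar>l\<bar> powr c * f x"
  unfolding admissible_def by blast

lemma sph_bounds:
  assumes "admissible r c f"
  shows "\<exists>m K. 0 < m \<and> 0 < K \<and> (\<forall>u\<in>vsph r. m \<le> f u \<and> f u \<le> K)"
proof (cases "vsph r = {}")
  case True
  then show ?thesis by (intro exI[of _ 1]) auto
next
  case False
  have cont: "continuous_on (vsph r) f"
    using adm_cont[OF assms] vsph_sub_rvec by (rule continuous_on_subset)
  obtain a where a: "a \<in> vsph r" "\<forall>y\<in>vsph r. f a \<le> f y"
    using continuous_attains_inf[OF compact_vsph False cont] by blast
  obtain b where b: "b \<in> vsph r" "\<forall>y\<in>vsph r. f y \<le> f b"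
    using continuous_attains_sup[OF compact_vsph False cont] by blast
  have "f a > 0" "f b > 0"
    using a(1) b(1) vsph_sub_rvec zero_vec_notin_vsph adm_pos[OF assms] by (metis subsetD)+
  then show ?thesis using a b by blast
qed

definition nv :: "nat \<Rightarrow> (nat \<Rightarrow> real) \<Rightarrow> real" where
  "nv r x = Max (insert 0 ((\<lambda>i. \<bar>x i\<bar>) ` {..<r}))"

lemma nv_ge: "i < r \<Longrightarrow> \<bar>x i\<bar> \<le> nv r x"
  unfolding nv_def by (intro Max_ge) auto

lemma nv_nonneg: "0 \<le> nv r x"
  unfolding nv_def by (intro Max_ge) auto

lemma nv_le_iff: "0 \<le> R \<Longrightarrow> nv r x \<le> R \<longleftrightarrow> (\<forall>i<r. \<bar>x i\<bar> \<le> R)"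
  unfolding nv_def by (subst Max_le_iff) auto

lemma nv_attained:
  assumes "nv r x > 0" shows "\<exists>i<r. \<bar>x i\<bar> = nv r x"
proof -
  have "nv r x \<in> insert 0 ((\<lambda>i. \<bar>x i\<bar>) ` {..<r})"
    unfolding nv_def by (intro Max_in) auto
  then show ?thesis using assms by auto
qed

lemma nv_zero: "x \<in> rvec r \<Longrightarrow> nv r x = 0 \<Longrightarrow> x = zero_vec r"
proof -
  assume x: "x \<in> rvec r" and n: "nv r x = 0"
  have "\<And>i. i < r \<Longrightarrow> x i = 0"
    using nv_ge[of _ r x] n by force
  then show ?thesis using x by (auto simp: zero_vec_def rvec_def PiE_def extensional_def)
qed

lemma vbox_iff: "0 \<le> R \<Longrightarrow> x \<in> vbox r R \<longleftrightarrow> x \<in> rvec r \<and> nv r x \<le> R"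
  apply (auto simp: vbox_def rvec_def nv_le_iff PiE_iff abs_le_iff)
  by (metis lessThan_iff minus_le_iff)

lemma scale_scale_rvec: "x \<in> rvec r \<Longrightarrow> n \<noteq> 0 \<Longrightarrow> scale_vec r n (scale_vec r (1/n) x) = x"
  by (auto simp: scale_vec_def rvec_def PiE_def extensional_def)

lemma hom_bounds:
  assumes "admissible r c f"
  shows "\<exists>m K. 0 < m \<and> 0 < K \<and> (\<forall>x\<in>rvec r. m * nv r x powr c \<le> f x \<and> f x \<le> K * nv r x powr c)"
proof -
  obtain m K where mK: "0 < m" "0 < K" "\<forall>u\<in>vsph r. m \<le> f u \<and> f u \<le> K"
    using sph_bounds[OF assms] by blast
  have "m * nv r x powr c \<le> f x \<and> f x \<le> K * nv r x powr c" if x: "x \<in> rvec r" for x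
  proof (cases "nv r x = 0")
    case True
    then show ?thesis using nv_zero[OF x True] adm_zero[OF assms] by simp
  next
    case False
    define n where "n = nv r x"
    have n: "n > 0" using False nv_nonneg[of r x] unfolding n_def by linarith
    define u where "u = scale_vec r (1/n) x"
    have "u \<in> vbox r 1"
    proof -
      have "-1 \<le> x i / n \<and> x i / n \<le> 1" if "i < r" for i
      proof -
        have "\<bar>x i\<bar> \<le> n" using nv_ge[OF that, of x] by (simp add: n_def)
        then show ?thesis using n by (simp add: abs_le_iff divide_le_eq le_divide_eq)
      qed
      then show ?thesis by (auto simp: vbox_def u_def scale_vec_def PiE_iff)
    qed
    moreover obtain i where "i < r" "\<bar>x i\<bar> = n" using nv_attained n unfolding n_def by blast
    then have "\<bar>u i\<bar> = 1" using n by (simp add: u_def scale_vec_def abs_mult)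
    ultimately have "u \<in> vsph r" using \<open>i < r\<close> by (auto simp: vsph_def)
    then have bu: "m \<le> f u" "f u \<le> K" using mK by auto
    have "f x = n powr c * f u"
      using scale_scale_rvec[OF x, of n] n adm_hom[OF assms, of u n] by (simp add: u_def)
    then show ?thesis using bu n by (simp add: n_def[symmetric] mult.commute)
  qed
  then show ?thesis using mK by blast
qed

lemma nv_from_f:
  fixes a m B c :: real
  assumes "0 < m" "0 < c" "0 \<le> a" "m * a powr c \<le> B"
  shows "a \<le> (B / m) powr (1 / c)"
proof -
  have "a powr c \<le> B / m" using assms by (simp add: le_divide_eq mult.commute)
  then have "(a powr c) powr (1/c) \<le> (B / m) powr (1/c)"
    using assms by (intro powr_mono2) auto
  moreover have "(a powr c) powr (1/c) = a" using assms by (simp add: powr_powr)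
  ultimately show ?thesis by simp
qed

lemma dist_fun_bound:
  fixes u v :: "nat \<Rightarrow> real"
  assumes "\<And>j. dist (u j) (v j) \<le> a"
  shows "dist u v \<le> 2 * a + (1/2) ^ N"
proof -
  have "Max {dist (u (from_nat n)) (v (from_nat n)) |n. n \<le> N} \<le> a"
  proof (subst Max_le_iff)
    have "{dist (u (from_nat n)) (v (from_nat n)) |n. n \<le> N} = (\<lambda>n. dist (u (from_nat n)) (v (from_nat n))) ` {..N}"
      by auto
    then show "finite {dist (u (from_nat n)) (v (from_nat n)) |n. n \<le> N}"
      "{dist (u (from_nat n)) (v (from_nat n)) |n. n \<le> N} \<noteq> {}" by auto
  qed (use assms in auto)
  then show ?thesis using dist_fun_le_dist_first_terms[of u v N] by linarith
qed

lemma unif_est: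
  assumes adm: "admissible r c f" and c: "c > 0" and e: "e > 0"
  shows "\<exists>B0>0. \<forall>B\<ge>B0. \<forall>x\<in>rvec r. (f x \<le> B \<or> f (fl r x) \<le> B) \<longrightarrow> \<bar>f x - f (fl r x)\<bar> \<le> e * B"
proof -
  obtain m K where mK: "0 < m" "0 < K" "\<forall>x\<in>rvec r. m * nv r x powr c \<le> f x \<and> f x \<le> K * nv r x powr c"
    using hom_bounds[OF adm] by blast
  define R0 where "R0 = (1 / m) powr (1 / c)"
  have R0: "R0 \<ge> 0" unfolding R0_def by simp
  define Kb where "Kb = vbox r (R0 + 1)"
  have "uniformly_continuous_on Kb f"
    unfolding Kb_def
    by (rule compact_uniformly_continuous[OF continuous_on_subset[OF adm_cont[OF adm] vbox_sub_rvec] compact_vbox])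
  then obtain d where d: "d > 0" "\<forall>u\<in>Kb. \<forall>v\<in>Kb. dist v u < d \<longrightarrow> dist (f v) (f u) < e"
    unfolding uniformly_continuous_on_def using e by blast
  obtain N where N: "(1/2::real) ^ N < d / 2"
    using real_arch_pow_inv[of "d/2" "1/2::real"] d by auto
  define T0 where "T0 = max 1 (4 / d)"
  define B0 where "B0 = T0 powr c"
  have T0: "T0 \<ge> 1" "T0 \<ge> 4 / d" unfolding T0_def by auto
  have B0: "B0 > 0" unfolding B0_def using T0 by simp
  have main: "\<bar>f x - f (fl r x)\<bar> \<le> e * B"
    if B: "B \<ge> B0" and x: "x \<in> rvec r" and fx: "f x \<le> B \<or> f (fl r x) \<le> B" for B x
  proof -
    define t where "t = B powr (1 / c)"
    have Bpos: "B > 0" using B B0 by linarith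
    have "t \<ge> B0 powr (1/c)" unfolding t_def using B B0 c by (intro powr_mono2) auto
    also have "B0 powr (1/c) = T0" unfolding B0_def using T0 c by (simp add: powr_powr)
    finally have tT0: "t \<ge> T0" .
    have tpos: "t > 0" using tT0 T0 by linarith
    have tc: "t powr c = B" unfolding t_def using Bpos c by (simp add: powr_powr)
    have flx: "fl r x \<in> rvec r" using fl_zvec zvec_sub_rvec by blast
    define u where "u = scale_vec r (1/t) x"
    define v where "v = scale_vec r (1/t) (fl r x)"
    have fu: "f x = B * f u"
      using adm_hom[OF adm x, of "1/t"] tpos tc Bpos
      by (simp add: u_def powr_divide)
    have fv: "f (fl r x) = B * f v"
      using adm_hom[OF adm flx, of "1/t"] tpos tc Bpos
      by (simp add: v_def powr_divide)
    have uv: "dist (u j) (v j) \<le> 1 / t" for j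
    proof (cases "j < r")
      case True
      have "\<bar>x j - real_of_int \<lfloor>x j\<rfloor>\<bar> \<le> 1" by linarith
      then have "\<bar>x j / t - real_of_int \<lfloor>x j\<rfloor> / t\<bar> \<le> 1 / t"
        using tpos by (simp add: diff_divide_distrib[symmetric] divide_right_mono)
      then show ?thesis using True by (simp add: u_def v_def scale_vec_def fl_def dist_real_def)
    next
      case False
      then show ?thesis using tpos by (simp add: u_def v_def scale_vec_def fl_def)
    qed
    have urv: "u \<in> rvec r" "v \<in> rvec r" unfolding u_def v_def by simp_all
    have uvi: "\<bar>v i\<bar> \<le> \<bar>u i\<bar> + 1" "\<bar>u i\<bar> \<le> \<bar>v i\<bar> + 1" for i
    proof -
      have "1 / t \<le> 1" using tT0 T0 by simp
      then show "\<bar>v i\<bar> \<le> \<bar>u i\<bar> + 1" "\<bar>u i\<bar> \<le> \<bar>v i\<bar> + 1"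
        using uv[of i] by (simp_all add: dist_real_def)
    qed
    have inKb: "u \<in> Kb \<and> v \<in> Kb"
    proof -
      have "f u \<le> 1 \<or> f v \<le> 1" using fx fu fv Bpos by (auto simp: mult_le_cancel_left1)
      then have "nv r u \<le> R0 \<or> nv r v \<le> R0"
        using nv_from_f[OF mK(1) c nv_nonneg, of r] mK(3) urv unfolding R0_def by fastforce
      then have "(\<forall>i<r. \<bar>u i\<bar> \<le> R0) \<or> (\<forall>i<r. \<bar>v i\<bar> \<le> R0)"
        using nv_le_iff[OF R0] by blast
      then have "(\<forall>i<r. \<bar>u i\<bar> \<le> R0 + 1) \<and> (\<forall>i<r. \<bar>v i\<bar> \<le> R0 + 1)"
        using uvi by (meson add_le_cancel_right le_add_same_cancel1 order_trans zero_le_one)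
      then show ?thesis unfolding Kb_def using urv R0 by (simp add: vbox_iff nv_le_iff)
    qed
    have "dist u v \<le> 2 * (1/t) + (1/2)^N" by (rule dist_fun_bound[OF uv])
    also have "2 * (1/t) \<le> d / 2"
    proof -
      have "T0 * d \<le> t * d" using tT0 d by (intro mult_right_mono) auto
      moreover have "4 \<le> T0 * d" using T0(2) d by (simp add: field_simps)
      ultimately have "4 \<le> d * t" by (simp add: mult.commute)
      then show ?thesis using tpos by (simp add: field_simps)
    qed
    finally have "dist u v < d" using N by linarith
    then have "dist (f u) (f v) < e" using d(2) inKb by (metis dist_commute)
    then have "\<bar>f u - f v\<bar> \<le> e" by (simp add: dist_real_def)
    then have "B * \<bar>f u - f v\<bar> \<le> B * e" using Bpos by (intro mult_left_mono) auto
    then show ?thesis using fu fv Bpos by (simp add: abs_mult right_diff_distrib[symmetric] mult.commute)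
  qed
  show ?thesis using B0 main by blast
qed



lemma vbox_sets: "vbox r R \<in> sets (leb_vec r)"
  unfolding vbox_def leb_vec_def by (intro sets_PiM_I_finite) auto

lemma vbox_emeasure: "R \<ge> 0 \<Longrightarrow> emeasure (leb_vec r) (vbox r R) = ennreal ((2*R)^r)"
  unfolding vbox_def by (simp add: emeasure_leb_vec_box ennreal_power)

lemma box_pair_emeasure:
  "R \<ge> 0 \<Longrightarrow> emeasure (leb_vec r1 \<Otimes>\<^sub>M leb_vec r2) (vbox r1 R \<times> vbox r2 R) = ennreal ((2*R)^r1 * (2*R)^r2)"
proof -
  assume R: "R \<ge> 0"
  interpret M2: sigma_finite_measure "leb_vec r2" by (rule sf_leb_vec)
  show ?thesis
    using R by (simp add: M2.emeasure_pair_measure_Times vbox_sets vbox_emeasure ennreal_mult)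
qed

lemma V_one_bounds:
  assumes c: "c > 0" and a1: "admissible r1 c f1" and a2: "admissible r2 c f2"
  shows "0 < emeasure (leb_vec r1 \<Otimes>\<^sub>M leb_vec r2) (V_set r1 r2 f1 f2 1)
       \<and> emeasure (leb_vec r1 \<Otimes>\<^sub>M leb_vec r2) (V_set r1 r2 f1 f2 1) < \<infinity>"
proof
  obtain m1 K1 where mK1: "0 < m1" "0 < K1" "\<forall>x\<in>rvec r1. m1 * nv r1 x powr c \<le> f1 x \<and> f1 x \<le> K1 * nv r1 x powr c"
    using hom_bounds[OF a1] by blast
  obtain m2 K2 where mK2: "0 < m2" "0 < K2" "\<forall>x\<in>rvec r2. m2 * nv r2 x powr c \<le> f2 x \<and> f2 x \<le> K2 * nv r2 x powr c"
    using hom_bounds[OF a2] by blast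
  have meas: "V_set r1 r2 f1 f2 1 \<in> sets (leb_vec r1 \<Otimes>\<^sub>M leb_vec r2)"
    using V_set_sets cont_borel_leb_vec adm_cont a1 a2 by blast
  define K where "K = max K1 K2"
  define dl where "dl = (1 / (2 * K)) powr (1 / c)"
  have K: "K > 0" "K1 \<le> K" "K2 \<le> K" using mK1 mK2 unfolding K_def by auto
  have dl: "dl > 0" unfolding dl_def using K by simp
  have dlc: "K * dl powr c = 1/2" unfolding dl_def using K c by (simp add: powr_powr)
  have sub1: "vbox r1 dl \<times> vbox r2 dl \<subseteq> V_set r1 r2 f1 f2 1"
  proof clarify
    fix x y assume x: "x \<in> vbox r1 dl" and y: "y \<in> vbox r2 dl"
    have xr: "x \<in> rvec r1" "nv r1 x \<le> dl" using x dl vbox_iff[of dl] by auto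
    have yr: "y \<in> rvec r2" "nv r2 y \<le> dl" using y dl vbox_iff[of dl] by auto
    have "f1 x \<le> K1 * nv r1 x powr c" using mK1 xr by auto
    also have "\<dots> \<le> K * dl powr c"
      using K xr c nv_nonneg[of r1 x] mK1 by (intro mult_mono powr_mono2) auto
    finally have 1: "f1 x \<le> 1/2" using dlc by simp
    have "f2 y \<le> K2 * nv r2 y powr c" using mK2 yr by auto
    also have "\<dots> \<le> K * dl powr c"
      using K yr c nv_nonneg[of r2 y] mK2 by (intro mult_mono powr_mono2) auto
    finally have 2: "f2 y \<le> 1/2" using dlc by simp
    show "(x, y) \<in> V_set r1 r2 f1 f2 1" using 1 2 xr yr by (simp add: V_set_def)
  qed
  have "0 < emeasure (leb_vec r1 \<Otimes>\<^sub>M leb_vec r2) (vbox r1 dl \<times> vbox r2 dl)"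
    using dl by (simp add: box_pair_emeasure)
  also have "\<dots> \<le> emeasure (leb_vec r1 \<Otimes>\<^sub>M leb_vec r2) (V_set r1 r2 f1 f2 1)"
    by (rule emeasure_mono[OF sub1 meas])
  finally show "0 < emeasure (leb_vec r1 \<Otimes>\<^sub>M leb_vec r2) (V_set r1 r2 f1 f2 1)" .
  define R where "R = max ((1 / m1) powr (1 / c)) ((1 / m2) powr (1 / c))"
  have R: "R \<ge> 0" unfolding R_def by (simp add: le_max_iff_disj)
  have sub2: "V_set r1 r2 f1 f2 1 \<subseteq> vbox r1 R \<times> vbox r2 R"
  proof
    fix p assume p: "p \<in> V_set r1 r2 f1 f2 1"
    obtain x y where pxy: "p = (x, y)" by (cases p)
    from p have xy: "x \<in> rvec r1" "y \<in> rvec r2" "f1 x + f2 y \<le> 1" by (auto simp: V_set_def pxy)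
    have "f1 x \<ge> 0" "f2 y \<ge> 0" using xy adm_nonneg a1 a2 by auto
    then have "f1 x \<le> 1" "f2 y \<le> 1" using xy by auto
    then have "m1 * nv r1 x powr c \<le> 1" "m2 * nv r2 y powr c \<le> 1" using mK1 mK2 xy by force+
    then have "nv r1 x \<le> (1 / m1) powr (1 / c)" "nv r2 y \<le> (1 / m2) powr (1 / c)"
      using nv_from_f mK1 mK2 c nv_nonneg by blast+
    then have "nv r1 x \<le> R" "nv r2 y \<le> R" unfolding R_def by auto
    then show "p \<in> vbox r1 R \<times> vbox r2 R" using vbox_iff[OF R] xy pxy by auto
  qed
  have "emeasure (leb_vec r1 \<Otimes>\<^sub>M leb_vec r2) (V_set r1 r2 f1 f2 1) \<le> emeasure (leb_vec r1 \<Otimes>\<^sub>M leb_vec r2) (vbox r1 R \<times> vbox r2 R)"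
    by (rule emeasure_mono[OF sub2]) (simp add: vbox_sets)
  also have "\<dots> < \<infinity>" using R by (simp add: box_pair_emeasure)
  finally show "emeasure (leb_vec r1 \<Otimes>\<^sub>M leb_vec r2) (V_set r1 r2 f1 f2 1) < \<infinity>" .
qed

lemma W_set_sets:
  assumes "f2 \<in> borel_measurable (leb_vec r2)"
  shows "W_set r1 r2 f1 f2 B \<in> sets (leb_vec r1 \<Otimes>\<^sub>M leb_vec r2)"
proof -
  have meas: "(\<lambda>(x, y). (fl r1 x, y)) \<in> measurable (leb_vec r1 \<Otimes>\<^sub>M leb_vec r2) (count_zvec r1 \<Otimes>\<^sub>M leb_vec r2)"
    using fl_measurable by measurable
  have "(\<lambda>(x, y). (fl r1 x, y)) -` I_set r1 r2 f1 f2 B \<inter> space (leb_vec r1 \<Otimes>\<^sub>M leb_vec r2) = W_set r1 r2 f1 f2 B"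
    by (auto simp: I_set_def W_set_def space_pair_measure fl_zvec)
  then show ?thesis using measurable_sets[OF meas I_set_sets[OF assms, of r1 f1 B]] by (simp only:)
qed

lemma V_scale':
  assumes c: "c > 0" and a1: "admissible r1 c f1" and a2: "admissible r2 c f2" and t: "t > 0"
  shows "emeasure (leb_vec r1 \<Otimes>\<^sub>M leb_vec r2) (V_set r1 r2 f1 f2 t)
     = ennreal (t powr ((r1 + r2) / c)) * emeasure (leb_vec r1 \<Otimes>\<^sub>M leb_vec r2) (V_set r1 r2 f1 f2 1)"
proof -
  define s where "s = t powr (1 / c)"
  have s: "s > 0" unfolding s_def using t by simp
  have st: "s powr c * 1 = t" unfolding s_def using t c by (simp add: powr_powr)
  have "emeasure (leb_vec r1 \<Otimes>\<^sub>M leb_vec r2) (V_set r1 r2 f1 f2 (s powr c * 1))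
    = ennreal s ^ (r1 + r2) * emeasure (leb_vec r1 \<Otimes>\<^sub>M leb_vec r2) (V_set r1 r2 f1 f2 1)"
    by (rule V_scale[OF s cont_borel_leb_vec[OF adm_cont[OF a1]] cont_borel_leb_vec[OF adm_cont[OF a2]]])
       (use a1 a2 in \<open>auto simp: admissible_def\<close>)
  moreover have "ennreal s ^ (r1 + r2) = ennreal (t powr ((r1 + r2) / c))"
  proof -
    have "ennreal s ^ (r1 + r2) = ennreal (s ^ (r1 + r2))" using s by (simp add: ennreal_power)
    also have "s ^ (r1 + r2) = s powr (real (r1 + r2))" by (rule powr_realpow[OF s, symmetric])
    also have "\<dots> = t powr ((r1 + r2) / c)" unfolding s_def using t by (simp add: powr_powr)
    finally show ?thesis .
  qed
  ultimately show ?thesis using st by simp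
qed

lemma sandwich:
  assumes c: "c > 0" and a1: "admissible r1 c f1" and a2: "admissible r2 c f2"
    and e: "0 < e" "e < 1"
  shows "\<exists>B0>0. \<forall>B\<ge>B0. V_set r1 r2 f1 f2 ((1 - e) * B) \<subseteq> W_set r1 r2 f1 f2 B
                      \<and> W_set r1 r2 f1 f2 B \<subseteq> V_set r1 r2 f1 f2 ((1 + e) * B)"
proof -
  obtain B0 where B0: "B0 > 0" "\<forall>B\<ge>B0. \<forall>x\<in>rvec r1. (f1 x \<le> B \<or> f1 (fl r1 x) \<le> B) \<longrightarrow> \<bar>f1 x - f1 (fl r1 x)\<bar> \<le> e * B"
    using unif_est[OF a1 c e(1)] by blast
  have "V_set r1 r2 f1 f2 ((1 - e) * B) \<subseteq> W_set r1 r2 f1 f2 B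
      \<and> W_set r1 r2 f1 f2 B \<subseteq> V_set r1 r2 f1 f2 ((1 + e) * B)" if B: "B \<ge> B0" for B
  proof
    show "V_set r1 r2 f1 f2 ((1 - e) * B) \<subseteq> W_set r1 r2 f1 f2 B"
    proof
      fix p assume p: "p \<in> V_set r1 r2 f1 f2 ((1 - e) * B)"
      obtain x y where pxy: "p = (x, y)" by (cases p)
      from p have xy: "x \<in> rvec r1" "y \<in> rvec r2" "f1 x + f2 y \<le> (1 - e) * B" by (auto simp: V_set_def pxy)
      have "f2 y \<ge> 0" using xy adm_nonneg a2 by auto
      moreover have eB: "e * B \<ge> 0" using e B B0 by simp
      moreover have eq: "(1 - e) * B = B - e * B" by (simp add: algebra_simps)
      ultimately have "f1 x \<le> B" using xy by linarith
      then have "\<bar>f1 x - f1 (fl r1 x)\<bar> \<le> e * B" using B0 B xy by blast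
      then have "f1 (fl r1 x) - f1 x \<le> e * B" by (simp add: abs_le_iff)
      then have "f1 (fl r1 x) + f2 y \<le> B" using xy eq by linarith
      then show "p \<in> W_set r1 r2 f1 f2 B" using xy pxy by (simp add: W_set_def)
    qed
  next
    show "W_set r1 r2 f1 f2 B \<subseteq> V_set r1 r2 f1 f2 ((1 + e) * B)"
    proof
      fix p assume p: "p \<in> W_set r1 r2 f1 f2 B"
      obtain x y where pxy: "p = (x, y)" by (cases p)
      from p have xy: "x \<in> rvec r1" "y \<in> rvec r2" "f1 (fl r1 x) + f2 y \<le> B" by (auto simp: W_set_def pxy)
      have "f2 y \<ge> 0" using xy adm_nonneg a2 by auto
      then have "f1 (fl r1 x) \<le> B" using xy by linarith
      then have "\<bar>f1 x - f1 (fl r1 x)\<bar> \<le> e * B" using B0 B xy by blast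
      then have "f1 x - f1 (fl r1 x) \<le> e * B" by (simp add: abs_le_iff)
      moreover have eq: "(1 + e) * B = B + e * B" by (simp add: algebra_simps)
      ultimately have "f1 x + f2 y \<le> (1 + e) * B" using xy by linarith
      then show "p \<in> V_set r1 r2 f1 f2 ((1 + e) * B)" using xy pxy by (simp add: V_set_def)
    qed
  qed
  then show ?thesis using B0 by blast
qed

theorem mainTheorem1:
  fixes r1 r2 :: nat and c :: real
    and f1 f2 :: "(nat \<Rightarrow> real) \<Rightarrow> real"
  assumes "c > 0"
    and "admissible r1 c f1"
    and "admissible r2 c f2"
  shows "((\<lambda>B. measure (count_zvec r1 \<Otimes>\<^sub>M leb_vec r2) (I_set r1 r2 f1 f2 B)
              / measure (leb_vec r1 \<Otimes>\<^sub>M leb_vec r2) (V_set r1 r2 f1 f2 B))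
          \<longlongrightarrow> 1) at_top"
proof -
  note c = assms(1) and a1 = assms(2) and a2 = assms(3)
  let ?M = "leb_vec r1 \<Otimes>\<^sub>M leb_vec r2"
  let ?C = "count_zvec r1 \<Otimes>\<^sub>M leb_vec r2"
  define d where "d = (r1 + r2) / c"
  define q where "q = (\<lambda>B. measure ?C (I_set r1 r2 f1 f2 B) / measure ?M (V_set r1 r2 f1 f2 B))"
  have m1: "f1 \<in> borel_measurable (leb_vec r1)" by (rule cont_borel_leb_vec[OF adm_cont[OF a1]])
  have m2: "f2 \<in> borel_measurable (leb_vec r2)" by (rule cont_borel_leb_vec[OF adm_cont[OF a2]])
  define v1 where "v1 = measure ?M (V_set r1 r2 f1 f2 1)"
  have V1: "emeasure ?M (V_set r1 r2 f1 f2 1) = ennreal v1" "v1 > 0"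
  proof -
    have b: "0 < emeasure ?M (V_set r1 r2 f1 f2 1)" "emeasure ?M (V_set r1 r2 f1 f2 1) < \<infinity>"
      using V_one_bounds[OF c a1 a2] by auto
    show e: "emeasure ?M (V_set r1 r2 f1 f2 1) = ennreal v1"
      unfolding v1_def using b by (intro emeasure_eq_ennreal_measure) auto
    show "v1 > 0" using b(1) unfolding e by simp
  qed
  have EV: "emeasure ?M (V_set r1 r2 f1 f2 B) = ennreal (B powr d * v1)" if B: "B > 0" for B
    using V_scale'[OF c a1 a2 B] V1 unfolding d_def by (simp add: ennreal_mult')
  have mV: "measure ?M (V_set r1 r2 f1 f2 B) = B powr d * v1" if B: "B > 0" for B
    using EV[OF B] V1 by (simp add: measure_def)
  have bounds: "\<exists>B0>0. \<forall>B\<ge>B0. (1 - e) powr d \<le> q B \<and> q B \<le> (1 + e) powr d"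
    if e: "0 < e" "e < 1" for e
  proof -
    obtain B0 where B0: "B0 > 0" "\<forall>B\<ge>B0. V_set r1 r2 f1 f2 ((1 - e) * B) \<subseteq> W_set r1 r2 f1 f2 B
                      \<and> W_set r1 r2 f1 f2 B \<subseteq> V_set r1 r2 f1 f2 ((1 + e) * B)"
      using sandwich[OF c a1 a2 e] by blast
    have "(1 - e) powr d \<le> q B \<and> q B \<le> (1 + e) powr d" if B: "B \<ge> B0" for B
    proof -
      have Bp: "B > 0" using B B0 by linarith
      have pos1: "(1 - e) * B > 0" "(1 + e) * B > 0" using Bp e by auto
      let ?lo = "((1 - e) * B) powr d * v1" and ?hi = "((1 + e) * B) powr d * v1"
      have "ennreal ?lo \<le> emeasure ?M (W_set r1 r2 f1 f2 B)"
        using emeasure_mono[OF conjunct1[OF B0(2)[rule_format, OF B]] W_set_sets[OF m2]] EV[OF pos1(1)] by simp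
      moreover have "emeasure ?M (W_set r1 r2 f1 f2 B) \<le> ennreal ?hi"
        using emeasure_mono[OF conjunct2[OF B0(2)[rule_format, OF B]] V_set_sets[OF m1 m2]] EV[OF pos1(2)] by simp
      moreover have "emeasure ?C (I_set r1 r2 f1 f2 B) = emeasure ?M (W_set r1 r2 f1 f2 B)"
        by (rule I_eq_W[OF m2])
      ultimately have le1: "ennreal ?lo \<le> emeasure ?C (I_set r1 r2 f1 f2 B)"
        and le2: "emeasure ?C (I_set r1 r2 f1 f2 B) \<le> ennreal ?hi" by auto
      have fin: "emeasure ?C (I_set r1 r2 f1 f2 B) \<noteq> \<infinity>"
        using le2 by (metis ennreal_neq_top infinity_ennreal_def neq_top_trans)
      define mI where "mI = measure ?C (I_set r1 r2 f1 f2 B)"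
      have EI: "emeasure ?C (I_set r1 r2 f1 f2 B) = ennreal mI"
        unfolding mI_def using fin by (intro emeasure_eq_ennreal_measure) auto
      have hi_nn: "?hi \<ge> 0" using V1 by simp
      have lo: "?lo \<le> mI" using le1 unfolding EI by (simp add: mI_def)
      have hi: "mI \<le> ?hi" using le2 unfolding EI using hi_nn by simp
      have split1: "((1 - e) * B) powr d = (1 - e) powr d * B powr d"
        using e Bp by (simp add: powr_mult)
      have split2: "((1 + e) * B) powr d = (1 + e) powr d * B powr d"
        using e Bp by (simp add: powr_mult)
      have den: "B powr d * v1 > 0" using Bp V1 by simp
      have qB: "q B = mI / (B powr d * v1)" unfolding q_def mI_def using mV[OF Bp] by simp
      have "(1 - e) powr d \<le> mI / (B powr d * v1)"
        using lo den unfolding split1 by (simp add: le_divide_eq mult.assoc)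
      moreover have "mI / (B powr d * v1) \<le> (1 + e) powr d"
        using hi den unfolding split2 by (simp add: divide_le_eq mult.assoc)
      ultimately show ?thesis unfolding qB by simp
    qed
    then show ?thesis using B0 by blast
  qed
  have "(q \<longlongrightarrow> 1) at_top"
  proof (rule tendstoI)
    fix eps :: real assume eps: "eps > 0"
    have t1: "((\<lambda>e::real. 1 + e) \<longlongrightarrow> 1) (at_right 0)"
      using tendsto_add[OF tendsto_const[of 1] tendsto_ident_at[of 0 "{0<..}"]] by simp
    have t2: "((\<lambda>e::real. 1 - e) \<longlongrightarrow> 1) (at_right 0)"
      using tendsto_diff[OF tendsto_const[of 1] tendsto_ident_at[of 0 "{0<..}"]] by simp
    have l1: "((\<lambda>e. (1 + e) powr d) \<longlongrightarrow> 1 powr d) (at_right 0)"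
      by (rule tendsto_powr[OF t1 tendsto_const]) simp
    have l2: "((\<lambda>e. (1 - e) powr d) \<longlongrightarrow> 1 powr d) (at_right 0)"
      by (rule tendsto_powr[OF t2 tendsto_const]) simp
    have ev: "eventually (\<lambda>e. 0 < e \<and> e < 1 \<and> dist ((1 + e) powr d) 1 < eps \<and> dist ((1 - e) powr d) 1 < eps) (at_right (0::real))"
    proof (intro eventually_conj)
      show "eventually (\<lambda>e. 0 < e) (at_right (0::real))" by (rule eventually_at_right_less)
      show "eventually (\<lambda>e. e < 1) (at_right (0::real))"
        by (rule eventually_at_right_to_0[THEN iffD2]) (auto simp: eventually_at_right_field intro!: exI[of _ 1])
      show "eventually (\<lambda>e. dist ((1 + e) powr d) 1 < eps) (at_right 0)"
        using tendstoD[OF l1 eps] by simp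
      show "eventually (\<lambda>e. dist ((1 - e) powr d) 1 < eps) (at_right 0)"
        using tendstoD[OF l2 eps] by simp
    qed
    then obtain e where e: "0 < e" "e < 1" "dist ((1 + e) powr d) 1 < eps" "dist ((1 - e) powr d) 1 < eps"
    proof -
      have nb: "at_right (0::real) \<noteq> bot"
        using trivial_limit_at_right_real[of "0::real"] eventually_False by metis
      show ?thesis using eventually_happens'[OF nb ev] that by blast
    qed
    obtain B0 where B0: "B0 > 0" "\<forall>B\<ge>B0. (1 - e) powr d \<le> q B \<and> q B \<le> (1 + e) powr d"
      using bounds[OF e(1,2)] by blast
    show "eventually (\<lambda>B. dist (q B) 1 < eps) at_top"
      unfolding eventually_at_top_linorder
    proof (intro exI allI impI)
      fix B assume "B \<ge> B0"
      then have "(1 - e) powr d \<le> q B" "q B \<le> (1 + e) powr d" using B0 by auto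
      then show "dist (q B) 1 < eps" using e(3,4) by (simp add: dist_real_def abs_less_iff)
    qed
  qed
  then show ?thesis unfolding q_def .
qed

end
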